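(* Let $R$ be a commutative ring with $1\neq 0$, $S\subseteq R$ a multiplicatively closed subset, and $M$ a finitely generated faithful multiplication $R$-module. For an ideal $I$ of $R$, the submodule $IM$ is an $S$-quasi-copure submodule of $M$ if and only if $I$ is an $S$-quasi-copure ideal of $R$ (i.e., an $S$-quasi-copure submodule of the $R$-module $R$).
   Context: All rings are commutative with $1\neq 0$ and all modules are unital. A multiplicatively closed subset (m.c.s.) $S$ of $R$ is a subset with $0\notin S$, $1\in S$, and $ss'\in S$ for all $s,s'\in S$. $M$ is a multiplication module if every submodule of $M$ equals $JM$ for some ideal $J$; faithful means $\mathrm{Ann}_R(M)=0$. For an ideal $I$ and submodule $L$, $(L:_M I)=\{m\in M: Im\subseteq L\}$, $(0:_M I)=\{m\in M: Im=0\}$, $(L:_R M)=\{r\in R: rM\subseteq L\}$. A submodule $P$ of $M$ with $(P:_R M)\cap S=\emptyset$ is $S$-prime if there exists $s\in S$ such that whenever $am\in P$ ($a\in R$, $m\in M$), then $sa\in(P:_R M)$ or $sm\in P$; $S$-prime ideals are $S$-prime submodules of $R$. A submodule $L$ of $M$ is $S$-copure if there exists $s\in S$ such that $s(L:_M I)\subseteq L+(0:_M I)$ for every ideal $I$ of $R$. A submodule $N$ of $M$ is $S$-quasi-copure if every $S$-prime submodule of $M$ containing $N$ is $S$-copure. *)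

theory Defs
  imports Main "HOL.Modules"
begin

text \<open>The ring R is a type 'a of class comm_ring_1 (so 1 \<noteq> 0); an R-module M is a type 'b
  with scalar multiplication sc satisfying the locale module sc (HOL.Modules).\<close>

definition mcs :: "'a::comm_ring_1 set \<Rightarrow> bool" where
  "mcs S \<longleftrightarrow> 0 \<notin> S \<and> 1 \<in> S \<and> (\<forall>s\<in>S. \<forall>t\<in>S. s * t \<in> S)"

definition is_ideal :: "'a::comm_ring_1 set \<Rightarrow> bool" where
  "is_ideal I \<longleftrightarrow> module.subspace ((*) :: 'a \<Rightarrow> 'a \<Rightarrow> 'a) I"

definition colonR :: "('a::comm_ring_1 \<Rightarrow> 'b::ab_group_add \<Rightarrow> 'b) \<Rightarrow> 'b set \<Rightarrow> 'a set" where
  "colonR sc L = {r. \<forall>m. sc r m \<in> L}"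

definition colonM :: "('a::comm_ring_1 \<Rightarrow> 'b::ab_group_add \<Rightarrow> 'b) \<Rightarrow> 'b set \<Rightarrow> 'a set \<Rightarrow> 'b set" where
  "colonM sc L I = {m. \<forall>a\<in>I. sc a m \<in> L}"

definition ideal_times :: "('a::comm_ring_1 \<Rightarrow> 'b::ab_group_add \<Rightarrow> 'b) \<Rightarrow> 'a set \<Rightarrow> 'b set" where
  "ideal_times sc I = module.span sc {sc a m | a m. a \<in> I}"

definition faithful :: "('a::comm_ring_1 \<Rightarrow> 'b::ab_group_add \<Rightarrow> 'b) \<Rightarrow> bool" where
  "faithful sc \<longleftrightarrow> colonR sc {0} = {0}"

definition fin_gen :: "('a::comm_ring_1 \<Rightarrow> 'b::ab_group_add \<Rightarrow> 'b) \<Rightarrow> bool" where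
  "fin_gen sc \<longleftrightarrow> (\<exists>F. finite F \<and> module.span sc F = UNIV)"

definition multiplication_module :: "('a::comm_ring_1 \<Rightarrow> 'b::ab_group_add \<Rightarrow> 'b) \<Rightarrow> bool" where
  "multiplication_module sc \<longleftrightarrow>
     (\<forall>N. module.subspace sc N \<longrightarrow> (\<exists>J. is_ideal J \<and> N = ideal_times sc J))"

definition S_prime :: "('a::comm_ring_1 \<Rightarrow> 'b::ab_group_add \<Rightarrow> 'b) \<Rightarrow> 'a set \<Rightarrow> 'b set \<Rightarrow> bool" where
  "S_prime sc S P \<longleftrightarrow> module.subspace sc P \<and> colonR sc P \<inter> S = {} \<and>
     (\<exists>s\<in>S. \<forall>a m. sc a m \<in> P \<longrightarrow> s * a \<in> colonR sc P \<or> sc s m \<in> P)"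

definition S_copure :: "('a::comm_ring_1 \<Rightarrow> 'b::ab_group_add \<Rightarrow> 'b) \<Rightarrow> 'a set \<Rightarrow> 'b set \<Rightarrow> bool" where
  "S_copure sc S L \<longleftrightarrow> module.subspace sc L \<and>
     (\<exists>s\<in>S. \<forall>I. is_ideal I \<longrightarrow>
        sc s ` colonM sc L I \<subseteq> {x + y | x y. x \<in> L \<and> y \<in> colonM sc {0} I})"

definition S_quasi_copure :: "('a::comm_ring_1 \<Rightarrow> 'b::ab_group_add \<Rightarrow> 'b) \<Rightarrow> 'a set \<Rightarrow> 'b set \<Rightarrow> bool" where
  "S_quasi_copure sc S N \<longleftrightarrow> module.subspace sc N \<and>
     (\<forall>P. S_prime sc S P \<and> N \<subseteq> P \<longrightarrow> S_copure sc S P)"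

end

theory Submission imports Defs begin

lemma module_mult: "module ((*) :: 'a::comm_ring_1 \<Rightarrow> 'a \<Rightarrow> 'a)"
  by unfold_locales (auto simp: algebra_simps)

lemma is_ideal_iff: "is_ideal (I::'a::comm_ring_1 set) \<longleftrightarrow>
   0 \<in> I \<and> (\<forall>x\<in>I. \<forall>y\<in>I. x + y \<in> I) \<and> (\<forall>c. \<forall>x\<in>I. c * x \<in> I)"
  unfolding is_ideal_def module.subspace_def[OF module_mult] by blast

lemma idealD:
  assumes "is_ideal (I::'a::comm_ring_1 set)"
  shows "0 \<in> I" "x \<in> I \<Longrightarrow> y \<in> I \<Longrightarrow> x + y \<in> I" "x \<in> I \<Longrightarrow> c * x \<in> I"
    "x \<in> I \<Longrightarrow> x * c \<in> I" "x \<in> I \<Longrightarrow> - x \<in> I" "x \<in> I \<Longrightarrow> y \<in> I \<Longrightarrow> x - y \<in> I"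
proof -
  show a: "0 \<in> I" "x \<in> I \<Longrightarrow> y \<in> I \<Longrightarrow> x + y \<in> I" "x \<in> I \<Longrightarrow> c * x \<in> I"
    using assms by (auto simp: is_ideal_iff)
  show "x \<in> I \<Longrightarrow> x * c \<in> I" using assms by (auto simp: is_ideal_iff mult.commute)
  show n: "x \<in> I \<Longrightarrow> - x \<in> I" using assms unfolding is_ideal_iff
    by (metis mult_minus1)
  show "x \<in> I \<Longrightarrow> y \<in> I \<Longrightarrow> x - y \<in> I" using assms unfolding is_ideal_iff
    by (metis diff_conv_add_uminus mult_minus1)
qed

definition maxl :: "'a::comm_ring_1 set \<Rightarrow> bool" where
  "maxl P \<longleftrightarrow> is_ideal P \<and> 1 \<notin> P \<and> (\<forall>a. a \<notin> P \<longrightarrow> (\<exists>p\<in>P. \<exists>r. 1 = p + r * a))"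

lemma maxl_prime:
  assumes "maxl P" "a * b \<in> P" "a \<notin> P" shows "b \<in> P"
proof -
  obtain p r where p: "p \<in> P" "1 = p + r * a" using assms unfolding maxl_def by blast
  have "b = p * b + r * (a * b)" using p(2) by (metis mult.assoc mult_1 ring_class.ring_distribs(2))
  moreover have "p * b \<in> P" "r * (a * b) \<in> P" using assms p idealD[of P] unfolding maxl_def by auto
  ultimately show ?thesis using assms idealD[of P] unfolding maxl_def by metis
qed

lemma maxl_exists:
  assumes K: "is_ideal (K::'a::comm_ring_1 set)" "1 \<notin> K"
  shows "\<exists>P. maxl P \<and> K \<subseteq> P"
proof -
  let ?A = "{Q. is_ideal Q \<and> K \<subseteq> Q \<and> (1::'a) \<notin> Q}"
  have "\<exists>M\<in>?A. \<forall>X\<in>?A. M \<subseteq> X \<longrightarrow> X = M"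
  proof (rule subset_Zorn)
    fix C assume ch: "subset.chain ?A C"
    show "\<exists>U\<in>?A. \<forall>X\<in>C. X \<subseteq> U"
    proof (cases "C = {}")
      case True then show ?thesis using K by auto
    next
      case False
      have sub: "C \<subseteq> ?A" and lin: "\<forall>X\<in>C. \<forall>Y\<in>C. X \<subseteq> Y \<or> Y \<subseteq> X"
        using ch by (auto simp: subset_chain_def)
      have "is_ideal (\<Union>C)" unfolding is_ideal_iff
      proof (intro conjI ballI allI)
        show "0 \<in> \<Union>C" using False sub idealD(1) by blast
      next
        fix x y assume "x \<in> \<Union>C" "y \<in> \<Union>C"
        then obtain X Y where "X \<in> C" "Y \<in> C" "x \<in> X" "y \<in> Y" by blast
        then show "x + y \<in> \<Union>C" using lin sub idealD(2)
          by (metis (no_types, lifting) UnionI mem_Collect_eq subset_eq)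
      next
        fix c x assume "x \<in> \<Union>C"
        then show "c * x \<in> \<Union>C" using sub idealD(3) by blast
      qed
      moreover have "K \<subseteq> \<Union>C" "1 \<notin> \<Union>C" using False sub by blast+
      ultimately show ?thesis by blast
    qed
  qed
  then obtain M where M: "M \<in> ?A" "\<forall>X\<in>?A. M \<subseteq> X \<longrightarrow> X = M" by blast
  have "maxl M" unfolding maxl_def
  proof (intro conjI allI impI)
    show "is_ideal M" "1 \<notin> M" using M by auto
    fix a assume a: "a \<notin> M"
    let ?Q = "{p + r * a | p r. p \<in> M}"
    have MI: "is_ideal M" using M by auto
    have mem: "\<And>p r. p \<in> M \<Longrightarrow> p + r * a \<in> ?Q" by blast
    have QI: "is_ideal ?Q" unfolding is_ideal_iff
    proof (intro conjI ballI allI)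
      show "0 \<in> ?Q" using mem[OF idealD(1)[OF MI], of 0] by simp
    next
      fix x y assume "x \<in> ?Q" "y \<in> ?Q"
      then obtain p r p' r' where "x = p + r * a" "y = p' + r' * a" "p \<in> M" "p' \<in> M" by blast
      moreover have "x + y = (p + p') + (r + r') * a" using calculation by (simp add: algebra_simps)
      moreover have "p + p' \<in> M" using idealD(2)[OF MI] calculation by blast
      ultimately show "x + y \<in> ?Q" using mem[of "p+p'" "r+r'"] by metis
    next
      fix c x assume "x \<in> ?Q"
      then obtain p r where "x = p + r * a" "p \<in> M" by blast
      moreover have "c * x = c * p + (c * r) * a" using \<open>x = p + r * a\<close> by (simp add: algebra_simps)
      moreover have "c * p \<in> M" using idealD(3)[OF MI] \<open>p \<in> M\<close> by blast
      ultimately show "c * x \<in> ?Q" using mem[of "c*p" "c*r"] by simp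
    qed
    have "M \<subseteq> ?Q"
    proof
      fix x assume "x \<in> M" then show "x \<in> ?Q" using mem[of x 0] by simp
    qed
    moreover have "a \<in> ?Q" using mem[OF idealD(1)[OF MI], of 1] by simp
    ultimately have MQ: "M \<subseteq> ?Q" and aQ: "a \<in> ?Q" by auto
    have KQ: "K \<subseteq> ?Q" using M MQ by auto
    have "1 \<in> ?Q"
    proof (rule ccontr)
      assume "1 \<notin> ?Q"
      then have "?Q \<in> ?A" using QI KQ by simp
      then have "?Q = M" by (rule M(2)[rule_format, OF _ MQ])
      then show False using aQ a by simp
    qed
    then show "\<exists>p\<in>M. \<exists>r. 1 = p + r * a" by blast
  qed
  then show ?thesis using M by auto
qed


context module
begin

lemma it_subspace: "subspace (ideal_times scale J)"
  unfolding ideal_times_def by simp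

lemma it_gen: "a \<in> J \<Longrightarrow> scale a m \<in> ideal_times scale J"
  unfolding ideal_times_def by (rule span_base) blast

lemma it_min: "subspace N \<Longrightarrow> (\<And>a m. a \<in> J \<Longrightarrow> scale a m \<in> N) \<Longrightarrow> ideal_times scale J \<subseteq> N"
  unfolding ideal_times_def by (rule span_minimal) auto

lemma it_induct[consumes 1, case_names sub gen]:
  assumes "x \<in> ideal_times scale J" "subspace (Collect P)" "\<And>a m. a \<in> J \<Longrightarrow> P (scale a m)"
  shows "P x"
  using it_min[OF assms(2), of J] assms(1,3) by blast

lemma it_mono: "J \<subseteq> K \<Longrightarrow> ideal_times scale J \<subseteq> ideal_times scale K"
  by (rule it_min[OF it_subspace]) (auto intro: it_gen)

lemma colon_ideal: assumes "subspace N" shows "is_ideal (colonR scale N)"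
  unfolding is_ideal_iff colonR_def using assms
  by (auto simp: subspace_0 subspace_add scale_left_distrib subspace_scale simp flip: scale_scale)

lemma mult_repr:
  assumes "multiplication_module scale" "subspace N"
  shows "N = ideal_times scale (colonR scale N)"
proof
  obtain J where J: "is_ideal J" "N = ideal_times scale J"
    using assms unfolding multiplication_module_def by blast
  have "J \<subseteq> colonR scale N" unfolding colonR_def using J(2) it_gen by blast
  then show "N \<subseteq> ideal_times scale (colonR scale N)" using J(2) it_mono by blast
  show "ideal_times scale (colonR scale N) \<subseteq> N"
    by (rule it_min[OF assms(2)]) (auto simp: colonR_def)
qed

lemma faithfulD: "faithful scale \<Longrightarrow> (\<And>x. scale u x = 0) \<Longrightarrow> u = 0"
  unfolding faithful_def colonR_def by blast

lemma cyc:
  assumes fg: "fin_gen scale" and ff: "faithful scale" and mm: "multiplication_module scale"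
    and P: "maxl P"
  shows "\<exists>m p. p \<in> P \<and> (\<forall>x. \<exists>r. scale (1 - p) x = scale r m)"
proof (rule ccontr)
  assume H0: "\<not> ?thesis"
  have PI: "is_ideal P" using P by (simp add: maxl_def)
  have H: "a \<in> P" if ax: "\<forall>x. \<exists>r. scale a x = scale r m" for a m
  proof (rule ccontr)
    assume "a \<notin> P"
    then obtain p r where p: "p \<in> P" "1 = p + r * a" using P unfolding maxl_def by blast
    have "\<exists>k. scale (1 - p) x = scale k m" for x
    proof -
      obtain k where "scale a x = scale k m" using ax by blast
      then have "scale (1 - p) x = scale (r * k) m" using p(2)
        by (metis add_diff_cancel_left' scale_scale)
      then show ?thesis by blast
    qed
    then show False using H0 p(1) by blast
  qed
  have C: "colonR scale (span {m}) \<subseteq> P" for m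
  proof
    fix a assume "a \<in> colonR scale (span {m})"
    then have "\<forall>x. \<exists>r. scale a x = scale r m" unfolding colonR_def span_singleton by auto
    then show "a \<in> P" by (rule H)
  qed
  have S1: "y \<in> ideal_times scale P" for y
  proof -
    have "y \<in> span {y}" by (simp add: span_base)
    also have "span {y} = ideal_times scale (colonR scale (span {y}))"
      by (rule mult_repr[OF mm]) simp
    also have "\<dots> \<subseteq> ideal_times scale P" by (rule it_mono[OF C])
    finally show ?thesis .
  qed
  have S2: "\<exists>p. p \<in> P \<and> scale p m = m" for m
  proof -
    let ?Pm = "{scale p m | p. p \<in> P}"
    have sPm: "subspace ?Pm"
    proof (rule subspaceI)
      show "0 \<in> ?Pm" using idealD(1)[OF PI] by (metis (mono_tags, lifting) mem_Collect_eq scale_zero_left)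
    next
      fix x y assume "x \<in> ?Pm" "y \<in> ?Pm"
      then obtain p q where "x = scale p m" "y = scale q m" "p \<in> P" "q \<in> P" by blast
      then show "x + y \<in> ?Pm" using idealD(2)[OF PI, of p q]
        by (metis (mono_tags, lifting) mem_Collect_eq scale_left_distrib)
    next
      fix c x assume "x \<in> ?Pm"
      then obtain p where "x = scale p m" "p \<in> P" by blast
      then show "scale c x \<in> ?Pm" using idealD(3)[OF PI, of p c]
        by (metis (mono_tags, lifting) mem_Collect_eq scale_scale)
    qed
    have "ideal_times scale (colonR scale (span {m})) \<subseteq> ?Pm"
    proof (rule it_min[OF sPm])
      fix c y assume c: "c \<in> colonR scale (span {m})"
      have "y \<in> ideal_times scale P" by (rule S1)
      then show "scale c y \<in> ?Pm"
      proof (induct rule: it_induct)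
        case sub
        show ?case
        proof (rule subspaceI)
          show "0 \<in> {x. scale c x \<in> ?Pm}" using subspace_0[OF sPm] by simp
        next
          fix x y assume "x \<in> {x. scale c x \<in> ?Pm}" "y \<in> {x. scale c x \<in> ?Pm}"
          then show "x + y \<in> {x. scale c x \<in> ?Pm}" using subspace_add[OF sPm]
            by (simp add: scale_right_distrib)
        next
          fix d x assume "x \<in> {x. scale c x \<in> ?Pm}"
          then show "scale d x \<in> {x. scale c x \<in> ?Pm}" using subspace_scale[OF sPm, of "scale c x" d]
            by (simp add: scale_left_commute mult.commute)
        qed
      next
        case (gen q z)
        have "scale c z \<in> span {m}" using c unfolding colonR_def by blast
        then obtain k where k: "scale c z = scale k m" unfolding span_singleton by blast
        have "scale c (scale q z) = scale (q * k) m" using k by (metis scale_left_commute scale_scale)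
        moreover have "q * k \<in> P" using idealD(4)[OF PI gen] .
        ultimately show ?case by blast
      qed
    qed
    moreover have "m \<in> ideal_times scale (colonR scale (span {m}))"
      using mult_repr[OF mm, of "span {m}"] span_base[of m "{m}"] by simp
    ultimately have "m \<in> ?Pm" by (rule subsetD)
    then obtain p where "m = scale p m" "p \<in> P" by blast
    then show ?thesis by auto
  qed
  have "\<forall>m. \<exists>p. p \<in> P \<and> scale p m = m" using S2 by blast
  from choice[OF this] obtain pf where pf0: "\<forall>m. pf m \<in> P \<and> scale (pf m) m = m" by blast
  then have pf: "\<And>m. pf m \<in> P \<and> scale (pf m) m = m" by blast
  obtain F where F: "finite F" "span F = UNIV" using fg unfolding fin_gen_def by blast
  define u where "u = (\<Prod>f\<in>F. 1 - pf f)"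
  have notP: "\<And>f. 1 - pf f \<notin> P"
  proof
    fix f assume "1 - pf f \<in> P"
    then have "(1 - pf f) + pf f \<in> P" using idealD(2)[OF PI] pf by blast
    then show False using P by (simp add: maxl_def)
  qed
  have "(\<Prod>f\<in>G. 1 - pf f) \<notin> P" if "finite G" for G
    using that
  proof (induct G rule: finite_induct)
    case empty then show ?case using P by (simp add: maxl_def)
  next
    case (insert g G)
    then show ?case using maxl_prime[OF P, of "1 - pf g"] notP by (simp, blast)
  qed
  then have uP: "u \<notin> P" using F(1) u_def by simp
  have uF: "scale u f = 0" if "f \<in> F" for f
  proof -
    have "u = (1 - pf f) * (\<Prod>g\<in>F - {f}. 1 - pf g)"
      unfolding u_def using prod.remove[OF F(1) that] by simp
    moreover have "scale (1 - pf f) f = 0" using pf[of f]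
      by (simp add: scale_left_diff_distrib)
    ultimately show ?thesis by (metis mult.commute scale_scale scale_zero_right)
  qed
  have "scale u x = 0" for x
  proof -
    have "x \<in> span F" using F by simp
    then show ?thesis
    proof (induct rule: span_induct)
      case base show ?case by (rule subspaceI) (auto simp: scale_right_distrib, metis mult.commute scale_scale scale_zero_right)
    next
      case (step x) then show ?case by (rule uF)
    qed
  qed
  then have "u = 0" by (rule faithfulD[OF ff])
  then show False using uP idealD(1)[OF PI] by simp
qed

end

context module
begin

lemma cancel:
  assumes fg: "fin_gen scale" and ff: "faithful scale" and mm: "multiplication_module scale"
    and J: "is_ideal J"
  shows "colonR scale (ideal_times scale J) = J"
proof
  show "J \<subseteq> colonR scale (ideal_times scale J)" unfolding colonR_def using it_gen by blast
  show "colonR scale (ideal_times scale J) \<subseteq> J"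
  proof
    fix a assume a: "a \<in> colonR scale (ideal_times scale J)"
    show "a \<in> J"
    proof (rule ccontr)
      assume aJ: "a \<notin> J"
      let ?K = "{r. r * a \<in> J}"
      have KI: "is_ideal ?K" unfolding is_ideal_iff using idealD[OF J]
        by (auto simp: distrib_right mult.assoc)
      have "1 \<notin> ?K" using aJ by simp
      then obtain P where P: "maxl P" "?K \<subseteq> P" using maxl_exists[OF KI] by blast
      have PI: "is_ideal P" using P by (simp add: maxl_def)
      obtain m p where mp: "p \<in> P" "\<forall>x. \<exists>r. scale (1 - p) x = scale r m"
        using cyc[OF fg ff mm P(1)] by blast
      define q where "q = 1 - p"
      have cl: "\<exists>j\<in>J. scale q z = scale j m" if "z \<in> ideal_times scale J" for z
        using that
      proof (induct rule: it_induct)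
        case sub
        show ?case
        proof (rule subspaceI)
          show "0 \<in> {z. \<exists>j\<in>J. scale q z = scale j m}" using idealD(1)[OF J] by force
        next
          fix x y assume "x \<in> {z. \<exists>j\<in>J. scale q z = scale j m}" "y \<in> {z. \<exists>j\<in>J. scale q z = scale j m}"
          then obtain j k where "j \<in> J" "k \<in> J" "scale q x = scale j m" "scale q y = scale k m" by blast
          then have "j + k \<in> J" "scale q (x + y) = scale (j + k) m"
            using idealD(2)[OF J] by (auto simp: scale_right_distrib scale_left_distrib)
          then show "x + y \<in> {z. \<exists>j\<in>J. scale q z = scale j m}" by blast
        next
          fix c x assume "x \<in> {z. \<exists>j\<in>J. scale q z = scale j m}"
          then obtain j where "j \<in> J" "scale q x = scale j m" by blast
          then have "c * j \<in> J" "scale q (scale c x) = scale (c * j) m"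
            using idealD(3)[OF J] by (auto, metis scale_left_commute scale_scale)
          then show "scale c x \<in> {z. \<exists>j\<in>J. scale q z = scale j m}" by blast
        qed
      next
        case (gen c y)
        obtain r where r: "scale q y = scale r m" using mp(2) q_def by blast
        have "scale q (scale c y) = scale (c * r) m" using r by (metis scale_left_commute scale_scale)
        moreover have "c * r \<in> J" using idealD(4)[OF J gen] .
        ultimately show ?case by blast
      qed
      obtain j where j: "j \<in> J" "scale q (scale a m) = scale j m"
        using cl[of "scale a m"] a unfolding colonR_def by blast
      define d where "d = q * a - j"
      have dm: "scale d m = 0" using j(2) unfolding d_def by (simp add: scale_left_diff_distrib)
      have "scale (d * q) x = 0" for x
      proof -
        obtain r where r: "scale q x = scale r m" using mp(2) q_def by blast
        have "scale (d * q) x = scale d (scale q x)" by simp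
        also have "\<dots> = scale r (scale d m)" using r by (simp add: mult.commute)
        finally show ?thesis using dm by simp
      qed
      then have "d * q = 0" by (rule faithfulD[OF ff])
      then have "q * q * a = j * q" unfolding d_def by (simp add: algebra_simps)
      then have "q * q \<in> ?K" using idealD(4)[OF J j(1)] by simp
      then have "q * q \<in> P" using P(2) by blast
      then have "q \<in> P" using maxl_prime[OF P(1), of q q] by blast
      then have "q + p \<in> P" using idealD(2)[OF PI _ mp(1)] by blast
      then show False using P(1) q_def by (simp add: maxl_def)
    qed
  qed
qed

end

lemma colonR_ring: "is_ideal Q \<Longrightarrow> colonR ((*) :: 'a::comm_ring_1 \<Rightarrow> 'a \<Rightarrow> 'a) Q = Q"
  unfolding colonR_def using idealD(4) by (auto, metis mult_1_right)

lemma sum_ideal: assumes "is_ideal Q" "is_ideal Z"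
  shows "is_ideal {x + y | x y. x \<in> Q \<and> y \<in> Z}"
  unfolding is_ideal_iff
proof (intro conjI ballI allI)
  show "0 \<in> {x + y | x y. x \<in> Q \<and> y \<in> Z}" using idealD(1)[OF assms(1)] idealD(1)[OF assms(2)] by force
next
  fix u v assume "u \<in> {x + y | x y. x \<in> Q \<and> y \<in> Z}" "v \<in> {x + y | x y. x \<in> Q \<and> y \<in> Z}"
  then obtain x y x' y' where "u = x + y" "v = x' + y'" "x \<in> Q" "y \<in> Z" "x' \<in> Q" "y' \<in> Z" by blast
  moreover have "u + v = (x + x') + (y + y')" using calculation by (simp add: algebra_simps)
  ultimately show "u + v \<in> {x + y | x y. x \<in> Q \<and> y \<in> Z}"
    using idealD(2)[OF assms(1), of x x'] idealD(2)[OF assms(2), of y y'] by blast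
next
  fix c u assume "u \<in> {x + y | x y. x \<in> Q \<and> y \<in> Z}"
  then obtain x y where "u = x + y" "x \<in> Q" "y \<in> Z" by blast
  moreover have "c * u = c * x + c * y" using calculation by (simp add: algebra_simps)
  ultimately show "c * u \<in> {x + y | x y. x \<in> Q \<and> y \<in> Z}"
    using idealD(3)[OF assms(1), of x c] idealD(3)[OF assms(2), of y c] by blast
qed

context module
begin

lemma pre_sub: assumes N: "subspace N" shows "subspace {x. scale s x \<in> N}"
proof (rule subspaceI)
  show "0 \<in> {x. scale s x \<in> N}" using subspace_0[OF N] by simp
  show "x + y \<in> {x. scale s x \<in> N}" if "x \<in> {x. scale s x \<in> N}" "y \<in> {x. scale s x \<in> N}" for x y
    using that subspace_add[OF N] by (simp add: scale_right_distrib)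
  show "scale c x \<in> {x. scale s x \<in> N}" if "x \<in> {x. scale s x \<in> N}" for c x
  proof -
    have "scale s (scale c x) = scale c (scale s x)" by (rule scale_left_commute)
    then show ?thesis using that subspace_scale[OF N, of "scale s x" c] by simp
  qed
qed

lemma colM_sub: assumes "subspace N" shows "subspace (colonM scale N I)"
proof -
  have "colonM scale N I = (\<Inter>a\<in>I. {x. scale a x \<in> N})" unfolding colonM_def by auto
  moreover have "subspace (\<Inter>a\<in>I. {x. scale a x \<in> N})"
    by (rule subspace_Int) (rule pre_sub[OF assms])
  ultimately show ?thesis by simp
qed

lemma sum_sub: assumes "subspace A" "subspace B"
  shows "subspace {x + y | x y. x \<in> A \<and> y \<in> B}"
proof (rule subspaceI)
  show "0 \<in> {x + y | x y. x \<in> A \<and> y \<in> B}" using subspace_0[OF assms(1)] subspace_0[OF assms(2)] by force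
next
  fix u v assume "u \<in> {x + y | x y. x \<in> A \<and> y \<in> B}" "v \<in> {x + y | x y. x \<in> A \<and> y \<in> B}"
  then obtain x y x' y' where "u = x + y" "v = x' + y'" "x \<in> A" "y \<in> B" "x' \<in> A" "y' \<in> B" by blast
  moreover have "u + v = (x + x') + (y + y')" using calculation by (simp add: algebra_simps)
  ultimately show "u + v \<in> {x + y | x y. x \<in> A \<and> y \<in> B}"
    using subspace_add[OF assms(1), of x x'] subspace_add[OF assms(2), of y y'] by blast
next
  fix c u assume "u \<in> {x + y | x y. x \<in> A \<and> y \<in> B}"
  then obtain x y where "u = x + y" "x \<in> A" "y \<in> B" by blast
  moreover have "scale c u = scale c x + scale c y" using calculation by (simp add: scale_right_distrib)
  ultimately show "scale c u \<in> {x + y | x y. x \<in> A \<and> y \<in> B}"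
    using subspace_scale[OF assms(1), of x c] subspace_scale[OF assms(2), of y c] by blast
qed

lemma it_sum: assumes Q: "is_ideal Q" and Z: "is_ideal Z"
  shows "ideal_times scale {x + y | x y. x \<in> Q \<and> y \<in> Z} =
    {x + y | x y. x \<in> ideal_times scale Q \<and> y \<in> ideal_times scale Z}"
proof
  show "ideal_times scale {x + y | x y. x \<in> Q \<and> y \<in> Z} \<subseteq>
    {x + y | x y. x \<in> ideal_times scale Q \<and> y \<in> ideal_times scale Z}"
  proof (rule it_min[OF sum_sub[OF it_subspace it_subspace]])
    fix a m assume "a \<in> {x + y | x y. x \<in> Q \<and> y \<in> Z}"
    then obtain x y where "a = x + y" "x \<in> Q" "y \<in> Z" by blast
    then show "scale a m \<in> {x + y | x y. x \<in> ideal_times scale Q \<and> y \<in> ideal_times scale Z}"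
      using it_gen[of x Q m] it_gen[of y Z m] by (auto simp: scale_left_distrib)
  qed
  have QL: "Q \<subseteq> {x + y | x y. x \<in> Q \<and> y \<in> Z}"
  proof
    fix x assume "x \<in> Q" then show "x \<in> {x + y | x y. x \<in> Q \<and> y \<in> Z}"
      using idealD(1)[OF Z] by force
  qed
  have ZL: "Z \<subseteq> {x + y | x y. x \<in> Q \<and> y \<in> Z}"
  proof
    fix y assume "y \<in> Z" then show "y \<in> {x + y | x y. x \<in> Q \<and> y \<in> Z}"
      using idealD(1)[OF Q] by force
  qed
  show "{x + y | x y. x \<in> ideal_times scale Q \<and> y \<in> ideal_times scale Z} \<subseteq>
    ideal_times scale {x + y | x y. x \<in> Q \<and> y \<in> Z}"
    using it_mono[OF QL] it_mono[OF ZL] subspace_add[OF it_subspace] by blast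
qed

lemma key_G:
  assumes fg: "fin_gen scale" and ff: "faithful scale" and mm: "multiplication_module scale"
    and K: "is_ideal K" and L: "is_ideal L"
  shows "(\<forall>k\<in>K. s * k \<in> L) \<longleftrightarrow> (\<forall>z\<in>ideal_times scale K. scale s z \<in> ideal_times scale L)"
proof
  assume H: "\<forall>k\<in>K. s * k \<in> L"
  show "\<forall>z\<in>ideal_times scale K. scale s z \<in> ideal_times scale L"
  proof
    fix z assume "z \<in> ideal_times scale K"
    then show "scale s z \<in> ideal_times scale L"
    proof (induct rule: it_induct)
      case sub show ?case by (rule pre_sub[OF it_subspace])
    next
      case (gen a m) then show ?case using H it_gen by simp
    qed
  qed
next
  assume H: "\<forall>z\<in>ideal_times scale K. scale s z \<in> ideal_times scale L"
  show "\<forall>k\<in>K. s * k \<in> L"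
  proof
    fix k assume "k \<in> K"
    then have "s * k \<in> colonR scale (ideal_times scale L)"
      unfolding colonR_def using H it_gen by (simp flip: scale_scale)
    then show "s * k \<in> L" using cancel[OF fg ff mm L] by simp
  qed
qed

lemma F4:
  assumes mm: "multiplication_module scale" and P: "subspace P"
  shows "S_prime scale S P \<longleftrightarrow> S_prime (*) S (colonR scale P)"
proof -
  let ?Q = "colonR scale P"
  have QI: "is_ideal ?Q" by (rule colon_ideal[OF P])
  have cQ: "colonR (*) ?Q = ?Q" by (rule colonR_ring[OF QI])
  have c1: "(\<exists>s\<in>S. \<forall>a m. scale a m \<in> P \<longrightarrow> s * a \<in> ?Q \<or> scale s m \<in> P) \<longleftrightarrow>
            (\<exists>s\<in>S. \<forall>a b. a * b \<in> ?Q \<longrightarrow> s * a \<in> ?Q \<or> s * b \<in> ?Q)"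
  proof
    assume "\<exists>s\<in>S. \<forall>a m. scale a m \<in> P \<longrightarrow> s * a \<in> ?Q \<or> scale s m \<in> P"
    then obtain s where s: "s \<in> S" "\<forall>a m. scale a m \<in> P \<longrightarrow> s * a \<in> ?Q \<or> scale s m \<in> P" by blast
    have "s * a \<in> ?Q \<or> s * b \<in> ?Q" if ab: "a * b \<in> ?Q" for a b
    proof (cases "s * a \<in> ?Q")
      case False
      have "scale (s * b) m \<in> P" for m
      proof -
        have "scale a (scale b m) \<in> P" using ab unfolding colonR_def by simp
        then have "scale s (scale b m) \<in> P" using s(2) False by blast
        then show ?thesis by simp
      qed
      then show ?thesis unfolding colonR_def by simp
    qed simp
    then show "\<exists>s\<in>S. \<forall>a b. a * b \<in> ?Q \<longrightarrow> s * a \<in> ?Q \<or> s * b \<in> ?Q" using s(1) by blast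
  next
    assume "\<exists>s\<in>S. \<forall>a b. a * b \<in> ?Q \<longrightarrow> s * a \<in> ?Q \<or> s * b \<in> ?Q"
    then obtain s where s: "s \<in> S" "\<forall>a b. a * b \<in> ?Q \<longrightarrow> s * a \<in> ?Q \<or> s * b \<in> ?Q" by blast
    have "s * a \<in> ?Q \<or> scale s m \<in> P" if am: "scale a m \<in> P" for a m
    proof (cases "s * a \<in> ?Q")
      case False
      let ?J = "colonR scale (span {m})"
      have cJ: "s * c \<in> ?Q" if c: "c \<in> ?J" for c
      proof -
        have "scale (a * c) x \<in> P" for x
        proof -
          have "scale c x \<in> span {m}" using c unfolding colonR_def by blast
          then obtain k where "scale c x = scale k m" unfolding span_singleton by blast
          then have "scale (a * c) x = scale k (scale a m)" by (metis scale_left_commute scale_scale)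
          then show ?thesis using subspace_scale[OF P am, of k] by simp
        qed
        then have "a * c \<in> ?Q" unfolding colonR_def by simp
        then show ?thesis using s(2) False by blast
      qed
      have "m \<in> ideal_times scale ?J"
        using mult_repr[OF mm, of "span {m}"] span_base[of m "{m}"] by simp
      then have "scale s m \<in> P"
      proof (induct rule: it_induct)
        case sub show ?case by (rule pre_sub[OF P])
      next
        case (gen c y)
        have "scale s (scale c y) = scale (s * c) y" by simp
        then show ?case using cJ[OF gen] unfolding colonR_def by simp
      qed
      then show ?thesis by simp
    qed simp
    then show "\<exists>s\<in>S. \<forall>a m. scale a m \<in> P \<longrightarrow> s * a \<in> ?Q \<or> scale s m \<in> P" using s(1) by blast
  qed
  show ?thesis unfolding S_prime_def cQ using P QI c1 by (simp add: is_ideal_def)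
qed

lemma F5:
  assumes fg: "fin_gen scale" and ff: "faithful scale" and mm: "multiplication_module scale"
    and P: "subspace P"
  shows "S_copure scale S P \<longleftrightarrow> S_copure (*) S (colonR scale P)"
proof -
  let ?Q = "colonR scale P"
  have QI: "is_ideal ?Q" by (rule colon_ideal[OF P])
  have PQ: "P = ideal_times scale ?Q" by (rule mult_repr[OF mm P])
  have eq: "(scale s ` colonM scale P I \<subseteq> {x + y | x y. x \<in> P \<and> y \<in> colonM scale {0} I}) \<longleftrightarrow>
        ((*) s ` colonM (*) ?Q I \<subseteq> {x + y | x y. x \<in> ?Q \<and> y \<in> colonM (*) {0} I})"
    if I: "is_ideal I" for s I
  proof -
    let ?AM = "colonM scale P I" and ?AR = "colonM (*) ?Q I"
    let ?ZM = "colonM scale {0} I" and ?ZR = "colonM (*) {0::'a} I"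
    have sAM: "subspace ?AM" by (rule colM_sub[OF P])
    have sZM: "subspace ?ZM" by (rule colM_sub) simp
    have cAM: "colonR scale ?AM = ?AR"
      unfolding colonR_def colonM_def by (auto simp: mult.commute)
    have cZM: "colonR scale ?ZM = ?ZR"
    proof -
      have "(\<forall>x. scale (a * r) x = 0) \<longleftrightarrow> a * r = 0" for a r
        using faithfulD[OF ff, of "a * r"] by auto
      then show ?thesis unfolding colonR_def colonM_def by (auto simp: mult.commute)
    qed
    have AM: "?AM = ideal_times scale ?AR" using mult_repr[OF mm sAM] cAM by simp
    have ZM: "?ZM = ideal_times scale ?ZR" using mult_repr[OF mm sZM] cZM by simp
    have ARI: "is_ideal ?AR" using colon_ideal[OF sAM] cAM by simp
    have ZRI: "is_ideal ?ZR" using colon_ideal[OF sZM] cZM by simp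
    let ?L = "{x + y | x y. x \<in> ?Q \<and> y \<in> ?ZR}"
    have LI: "is_ideal ?L" by (rule sum_ideal[OF QI ZRI])
    have LM: "ideal_times scale ?L = {x + y | x y. x \<in> P \<and> y \<in> ?ZM}"
      using it_sum[OF QI ZRI] PQ ZM by simp
    have "(scale s ` ?AM \<subseteq> {x + y | x y. x \<in> P \<and> y \<in> ?ZM}) \<longleftrightarrow>
          (\<forall>z\<in>ideal_times scale ?AR. scale s z \<in> ideal_times scale ?L)"
      using AM LM by auto
    also have "\<dots> \<longleftrightarrow> (\<forall>k\<in>?AR. s * k \<in> ?L)" using key_G[OF fg ff mm ARI LI] by simp
    also have "\<dots> \<longleftrightarrow> ((*) s ` ?AR \<subseteq> ?L)" by auto
    finally show ?thesis .
  qed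
  show ?thesis unfolding S_copure_def using P QI eq by (simp add: is_ideal_def)
qed

end

theorem theorem3p6:
  fixes sc :: "'a::comm_ring_1 \<Rightarrow> 'b::ab_group_add \<Rightarrow> 'b"
    and S I :: "'a set"
  assumes "module sc"
    and "mcs S"
    and "fin_gen sc"
    and "faithful sc"
    and "multiplication_module sc"
    and "is_ideal I"
  shows "S_quasi_copure sc S (ideal_times sc I) \<longleftrightarrow> S_quasi_copure ((*) :: 'a \<Rightarrow> 'a \<Rightarrow> 'a) S I"
proof -
  interpret m: module sc by (rule assms(1))
  note fg = assms(3) and ff = assms(4) and mm = assms(5)
  show ?thesis
  proof
    assume L: "S_quasi_copure sc S (ideal_times sc I)"
    show "S_quasi_copure (*) S I" unfolding S_quasi_copure_def
    proof (intro conjI allI impI)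
      show "module.subspace (*) I" using assms(6) by (simp add: is_ideal_def)
      fix Q assume Q: "S_prime (*) S Q \<and> I \<subseteq> Q"
      then have QI: "is_ideal Q" by (simp add: S_prime_def is_ideal_def)
      let ?P = "ideal_times sc Q"
      have sP: "m.subspace ?P" by (rule m.it_subspace)
      have cP: "colonR sc ?P = Q" by (rule m.cancel[OF fg ff mm QI])
      have "S_prime sc S ?P" using m.F4[OF mm sP] cP Q by simp
      moreover have "ideal_times sc I \<subseteq> ?P" using Q m.it_mono by blast
      ultimately have "S_copure sc S ?P" using L unfolding S_quasi_copure_def by blast
      then show "S_copure (*) S Q" using m.F5[OF fg ff mm sP] cP by simp
    qed
  next
    assume R: "S_quasi_copure (*) S I"
    show "S_quasi_copure sc S (ideal_times sc I)" unfolding S_quasi_copure_def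
    proof (intro conjI allI impI)
      show "m.subspace (ideal_times sc I)" by (rule m.it_subspace)
      fix P assume P: "S_prime sc S P \<and> ideal_times sc I \<subseteq> P"
      then have sP: "m.subspace P" by (simp add: S_prime_def)
      have "S_prime (*) S (colonR sc P)" using m.F4[OF mm sP] P by simp
      moreover have "I \<subseteq> colonR sc P" using P m.it_gen unfolding colonR_def by blast
      ultimately have "S_copure (*) S (colonR sc P)" using R unfolding S_quasi_copure_def by blast
      then show "S_copure sc S P" using m.F5[OF fg ff mm sP] by simp
    qed
  qed
qed

end
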